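(* Let $\Omega\subset\mathbb{R}^n$ ($n\ge3$) be a bounded Lipschitz domain and assume: $p_0,p_1$ measurable with $2\le p_0^-\le p_0\le p_0^+<\infty$, $1<p_1^-\le p_1\le p_1^+<\infty$, $p_0\in C^1(\bar\Omega)$, $p_1\in C^0(\bar\Omega)$; $\alpha$ measurable with $1\le\alpha^-\le\alpha\le\alpha^+<\infty$ and $\alpha\ge p_0+\varepsilon$ for some $\varepsilon>0$; $c$ Carathéodory with $|c(x,\tau)|\le c_0(x)|\tau|^{\alpha(x)-1}+c_1(x)$ and $c(x,\tau)\tau\ge c_2(x)|\tau|^{\alpha(x)}$ a.e., where $c_0,c_2\in L^\infty(\Omega)$, $c_1\in L^{\alpha'(x)}(\Omega)$ are nonnegative and $c_2\ge\tilde C>0$. Let $X_0=W_0^{1,p_0(x)}(\Omega)\cap W_0^{1,p_1(x)}(\Omega)\cap L^{\alpha(x)}(\Omega)$ and for $u\in X_0$ $$\langle T(u),u\rangle=\int_\Omega|\nabla u|^{p_1(x)}dx+\sum_{i=1}^n\int_\Omega|u|^{p_0(x)-2}|D_iu|^2dx+\int_\Omega c(x,u)u\,dx.$$ Then $T$ is coercive in the generalized sense on $X_0$: there exist $M>0$ and continuous functions $\lambda_0,\lambda_1$ on $[0,\infty)$ with $\lambda_0(\tau),\lambda_1(\tau)\nearrow\infty$ as $\tau\nearrow\infty$ such that for every $u\in X_0$ with $\|u\|_{W_0^{1,p_1(x)}(\Omega)}\ge M$ and $[u]_S\ge M$, $$\langle T(u),u\rangle\ge\lambda_0\big(\|u\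|_{W_0^{1,p_1(x)}(\Omega)}\big)\|u\|_{W_0^{1,p_1(x)}(\Omega)}+\lambda_1([u]_S)[u]_S.$$
   Context: $D_i=\partial/\partial x_i$; $q_0=p_0/(p_0-1)$, $\alpha'=\alpha/(\alpha-1)$; variable-exponent Lebesgue/Sobolev spaces $L^{p(x)}$, $W_0^{1,p(x)}$ are as usual, with $\|u\|_{W_0^{1,p_1(x)}}=\sum_i\|D_iu\|_{L^{p_1(x)}}$ (Luxemburg norms). $T=A+B_1+B_2$ with $A(u)=-\operatorname{div}(|\nabla u|^{p_1-2}\nabla u)$, $B_1(u)=-\sum_iD_i(|u|^{p_0-2}D_iu)$, $B_2(u)=c(x,u)$. $[u]_S$ is the pseudo-norm of $\mathring S_{1,q_0(x)(p_0(x)-2),q_0(x),\alpha(x)}(\Omega)$, namely with $\gamma=q_0(p_0-2)$, $\beta=q_0$: $[u]_S=\inf\{\lambda>0:\int_\Omega|u/\lambda|^{\alpha(x)}dx+\sum_{i=1}^n\int_\Omega\big|\,|u|^{\gamma(x)/\beta(x)}D_iu/\lambda^{\gamma(x)/\beta(x)+1}\big|^{\beta(x)}dx\le1\}$. *)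

theory Defs
  imports "HOL-Analysis.Analysis"
begin

(* power with the convention t^0 = 1 (also for t = 0); Isabelle's powr has 0 powr a = 0 *)
definition npow :: "real \<Rightarrow> real \<Rightarrow> real" where
  "npow t a = (if a = 0 then 1 else t powr a)"

definition pd :: "'n::finite \<Rightarrow> (real^'n \<Rightarrow> real) \<Rightarrow> real^'n \<Rightarrow> real" where
  "pd i f x = deriv (\<lambda>t. f (x + t *\<^sub>R axis i 1)) 0"

definition smooth_on_set :: "(real^'n::finite) set \<Rightarrow> (real^'n \<Rightarrow> real) \<Rightarrow> bool" where
  "smooth_on_set U f \<longleftrightarrow> (\<exists>D :: 'n list \<Rightarrow> real^'n \<Rightarrow> real. D [] = f \<and>
      (\<forall>l. continuous_on U (D l)) \<and>
      (\<forall>l i x. x \<in> U \<longrightarrow> ((\<lambda>t. D l (x + t *\<^sub>R axis i 1)) has_real_derivative D (i # l) x) (at 0)))"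

definition test_fun :: "(real^'n::finite) set \<Rightarrow> (real^'n \<Rightarrow> real) \<Rightarrow> bool" where
  "test_fun \<Omega> \<phi> \<longleftrightarrow> smooth_on_set UNIV \<phi> \<and> compact (closure {x. \<phi> x \<noteq> 0})
      \<and> closure {x. \<phi> x \<noteq> 0} \<subseteq> \<Omega>"

definition weak_pderiv :: "(real^'n::finite) set \<Rightarrow> (real^'n \<Rightarrow> real) \<Rightarrow> 'n \<Rightarrow> (real^'n \<Rightarrow> real) \<Rightarrow> bool" where
  "weak_pderiv \<Omega> u i v \<longleftrightarrow>
     (\<forall>K. compact K \<and> K \<subseteq> \<Omega> \<longrightarrow> set_integrable lebesgue K u \<and> set_integrable lebesgue K v) \<and>
     (\<forall>\<phi>. test_fun \<Omega> \<phi> \<longrightarrow>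
        (LINT x|lebesgue_on \<Omega>. u x * pd i \<phi> x) = - (LINT x|lebesgue_on \<Omega>. v x * \<phi> x))"

definition modular :: "(real^'n::finite) set \<Rightarrow> (real^'n \<Rightarrow> real) \<Rightarrow> (real^'n \<Rightarrow> real) \<Rightarrow> ennreal" where
  "modular \<Omega> p f = (\<integral>\<^sup>+ x. ennreal (\<bar>f x\<bar> powr p x) \<partial>lebesgue_on \<Omega>)"

definition var_Lp :: "(real^'n::finite) set \<Rightarrow> (real^'n \<Rightarrow> real) \<Rightarrow> (real^'n \<Rightarrow> real) \<Rightarrow> bool" where
  "var_Lp \<Omega> p f \<longleftrightarrow> f \<in> borel_measurable (lebesgue_on \<Omega>) \<and>
      (\<exists>s>0. modular \<Omega> p (\<lambda>x. f x / s) < \<infinity>)"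

definition lux :: "(real^'n::finite) set \<Rightarrow> (real^'n \<Rightarrow> real) \<Rightarrow> (real^'n \<Rightarrow> real) \<Rightarrow> real" where
  "lux \<Omega> p f = Inf {s. s > 0 \<and> modular \<Omega> p (\<lambda>x. f x / s) \<le> 1}"

definition W0 :: "(real^'n::finite) set \<Rightarrow> (real^'n \<Rightarrow> real) \<Rightarrow> (real^'n \<Rightarrow> real) \<Rightarrow> ('n \<Rightarrow> real^'n \<Rightarrow> real) \<Rightarrow> bool" where
  "W0 \<Omega> p u Du \<longleftrightarrow> var_Lp \<Omega> p u \<and> (\<forall>i. var_Lp \<Omega> p (Du i)) \<and>
     (\<exists>\<phi> :: nat \<Rightarrow> real^'n \<Rightarrow> real. (\<forall>k. test_fun \<Omega> (\<phi> k)) \<and>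
        (\<lambda>k. lux \<Omega> p (\<lambda>x. u x - \<phi> k x) + (\<Sum>i\<in>UNIV. lux \<Omega> p (\<lambda>x. Du i x - pd i (\<phi> k) x)))
          \<longlonglongrightarrow> 0)"

definition W0norm :: "(real^'n::finite) set \<Rightarrow> (real^'n \<Rightarrow> real) \<Rightarrow> ('n \<Rightarrow> real^'n \<Rightarrow> real) \<Rightarrow> real" where
  "W0norm \<Omega> p Du = (\<Sum>i\<in>UNIV. lux \<Omega> p (Du i))"

definition Snorm :: "(real^'n::finite) set \<Rightarrow> (real^'n \<Rightarrow> real) \<Rightarrow> (real^'n \<Rightarrow> real)
     \<Rightarrow> (real^'n \<Rightarrow> real) \<Rightarrow> ('n \<Rightarrow> real^'n \<Rightarrow> real) \<Rightarrow> real" where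
  "Snorm \<Omega> p0 \<alpha> u Du =
    (let \<beta> = (\<lambda>x. p0 x / (p0 x - 1)); \<gamma> = (\<lambda>x. \<beta> x * (p0 x - 2)) in
     Inf {s. s > 0 \<and>
        modular \<Omega> \<alpha> (\<lambda>x. u x / s) +
        (\<Sum>i\<in>UNIV. modular \<Omega> \<beta>
            (\<lambda>x. npow \<bar>u x\<bar> (\<gamma> x / \<beta> x) * Du i x / s powr (\<gamma> x / \<beta> x + 1))) \<le> 1})"

definition Tpair :: "(real^'n::finite) set \<Rightarrow> (real^'n \<Rightarrow> real) \<Rightarrow> (real^'n \<Rightarrow> real)
     \<Rightarrow> (real^'n \<Rightarrow> real \<Rightarrow> real) \<Rightarrow> (real^'n \<Rightarrow> real) \<Rightarrow> ('n \<Rightarrow> real^'n \<Rightarrow> real) \<Rightarrow> real" where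
  "Tpair \<Omega> p0 p1 c u Du =
     (LINT x|lebesgue_on \<Omega>. norm (\<chi> i. Du i x) powr p1 x)
     + (\<Sum>i\<in>UNIV. LINT x|lebesgue_on \<Omega>. npow \<bar>u x\<bar> (p0 x - 2) * (Du i x)\<^sup>2)
     + (LINT x|lebesgue_on \<Omega>. c x (u x) * u x)"

definition lipschitz_domain :: "(real^'n::finite) set \<Rightarrow> bool" where
  "lipschitz_domain \<Omega> \<longleftrightarrow> open \<Omega> \<and> connected \<Omega> \<and> bounded \<Omega> \<and>
    (\<forall>x0\<in>frontier \<Omega>. \<exists>R k g L r h.
       orthogonal_transformation (R :: real^'n \<Rightarrow> real^'n) \<and> L-lipschitz_on UNIV g \<and>
       (\<forall>y t. g (y + t *\<^sub>R axis k 1) = g y) \<and> r > 0 \<and> h > 0 \<and>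
       (\<forall>x. (let y = R (x - x0) in norm (y - (y $ k) *\<^sub>R axis k 1) < r \<and> \<bar>y $ k\<bar> < h) \<longrightarrow>
            (x \<in> \<Omega> \<longleftrightarrow> (R (x - x0)) $ k > g (R (x - x0)))))"

definition C1_closure :: "(real^'n::finite) set \<Rightarrow> (real^'n \<Rightarrow> real) \<Rightarrow> bool" where
  "C1_closure \<Omega> f \<longleftrightarrow> continuous_on (closure \<Omega>) f \<and>
     (\<exists>G :: real^'n \<Rightarrow> real^'n. continuous_on (closure \<Omega>) G \<and>
        (\<forall>x\<in>\<Omega>. (f has_derivative (\<lambda>h. G x \<bullet> h)) (at x)))"

end

theory Submission
  imports Defs
begin

lemma carath_meas:
  fixes c :: "'a::euclidean_space \<Rightarrow> real \<Rightarrow> real"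
  assumes S: "S \<in> sets lebesgue"
    and cm: "\<And>\<tau>. (\<lambda>x. c x \<tau>) \<in> borel_measurable (lebesgue_on S)"
    and cc: "AE x in lebesgue_on S. continuous_on UNIV (c x)"
    and um: "u \<in> borel_measurable (lebesgue_on S)"
  shows "(\<lambda>x. c x (u x)) \<in> borel_measurable (lebesgue_on S)"
proof -
  let ?L = "lebesgue_on S"
  obtain N where N: "N \<in> null_sets ?L" "{x \<in> space ?L. \<not> continuous_on UNIV (c x)} \<subseteq> N"
  proof -
    from cc obtain N where "{x \<in> space ?L. \<not> continuous_on UNIV (c x)} \<subseteq> N" "emeasure ?L N = 0" "N \<in> sets ?L"
      by (rule AE_E)
    then show ?thesis using that by (auto intro: null_setsI)
  qed
  have Nm: "N \<in> sets ?L" using N by auto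
  define v where "v k x = real_of_int \<lfloor>real (Suc k) * u x\<rfloor> / real (Suc k)" for k x
  define f where "f k x = (if x \<in> N then 0 else c x (v k x))" for k x
  define F where "F x = (if x \<in> N then 0 else c x (u x))" for x
  have fm: "f k \<in> borel_measurable ?L" for k
  proof -
    have g: "(\<lambda>x. \<lfloor>real (Suc k) * u x\<rfloor>) \<in> measurable ?L (count_space UNIV)"
      using um by measurable
    have "(\<lambda>x. c x (real_of_int (\<lfloor>real (Suc k) * u x\<rfloor>) / real (Suc k))) \<in> borel_measurable ?L"
      by (rule measurable_compose_countable[OF _ g]) (rule cm)
    then show ?thesis unfolding f_def v_def using Nm by measurable
  qed
  have vconv: "(\<lambda>k. v k x) \<longlonglongrightarrow> u x" for x
  proof (rule tendsto_sandwich[of "\<lambda>k. u x - 1 / real (Suc k)" _ _ "\<lambda>k. u x"])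
    show "\<forall>\<^sub>F k in sequentially. u x - 1 / real (Suc k) \<le> v k x"
    proof (intro always_eventually allI)
      fix k
      have "real (Suc k) * u x - 1 \<le> real_of_int \<lfloor>real (Suc k) * u x\<rfloor>"
        by linarith
      then have "(real (Suc k) * u x - 1) / real (Suc k) \<le> v k x" unfolding v_def
        by (rule divide_right_mono) simp
      then show "u x - 1 / real (Suc k) \<le> v k x"
        by (simp add: diff_divide_distrib del: of_nat_Suc)
    qed
    show "\<forall>\<^sub>F k in sequentially. v k x \<le> u x"
    proof (intro always_eventually allI)
      fix k
      have "real_of_int \<lfloor>real (Suc k) * u x\<rfloor> \<le> real (Suc k) * u x"
        by linarith
      then show "v k x \<le> u x" unfolding v_def
        by (simp add: field_simps)
    qed
    have "(\<lambda>k. 1 / real (Suc k)) \<longlonglongrightarrow> 0"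
      using LIMSEQ_inverse_real_of_nat by (simp add: inverse_eq_divide)
    then show "(\<lambda>k. u x - 1 / real (Suc k)) \<longlonglongrightarrow> u x"
      using tendsto_diff[OF tendsto_const[of "u x"]] by fastforce
  qed simp
  have Fm: "F \<in> borel_measurable ?L"
  proof (rule borel_measurable_LIMSEQ_real[OF _ fm])
    fix x assume x: "x \<in> space ?L"
    show "(\<lambda>k. f k x) \<longlonglongrightarrow> F x"
    proof (cases "x \<in> N")
      case True then show ?thesis by (simp add: f_def F_def)
    next
      case False
      then have "continuous_on UNIV (c x)" using N(2) x by blast
      then have "isCont (c x) (u x)" by (simp add: continuous_on_eq_continuous_at)
      then have "(\<lambda>k. c x (v k x)) \<longlonglongrightarrow> c x (u x)"
        using isCont_tendsto_compose vconv by blast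
      then show ?thesis using False by (simp add: f_def F_def)
    qed
  qed
  have ae: "AE x in ?L. F x = c x (u x)"
    using AE_not_in[OF N(1)] by eventually_elim (simp add: F_def)
  have SS: "S \<inter> space lebesgue \<in> sets lebesgue" using S by simp
  have "(\<lambda>x. indicator S x *\<^sub>R F x) \<in> borel_measurable lebesgue"
    using Fm borel_measurable_restrict_space_iff[OF SS] by blast
  moreover have "AE x in lebesgue. indicator S x *\<^sub>R F x = indicator S x *\<^sub>R c x (u x)"
  proof -
    have "AE x in lebesgue. x \<in> S \<longrightarrow> F x = c x (u x)"
      using ae S by (simp add: AE_restrict_space_iff)
    then show ?thesis by eventually_elim (auto simp: indicator_def)
  qed
  ultimately have "(\<lambda>x. indicator S x *\<^sub>R c x (u x)) \<in> borel_measurable lebesgue"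
    by (rule borel_measurable_AE)
  then show ?thesis
    using borel_measurable_restrict_space_iff[OF SS] by blast
qed

lemma powr_m1: fixes x a :: real assumes "x \<ge> 0" shows "x powr (a - 1) * x = x powr a"
proof (cases "x = 0")
  case False
  have h: "x powr (a - 1 + 1) = x powr (a - 1) * x powr 1" by (rule powr_add)
  show ?thesis using h assms by simp
qed simp

lemma powr_le1: fixes x p :: real assumes "0 \<le> x" "x \<le> 1" "0 \<le> p" shows "x powr p \<le> 1"
  using powr_mono2[OF assms(3,1,2)] by simp

lemma scale_eq: fixes f s p :: real assumes "s > 0"
  shows "\<bar>f\<bar> powr p = s powr p * \<bar>f / s\<bar> powr p"
proof -
  have "\<bar>f / s\<bar> powr p = \<bar>f\<bar> powr p / s powr p" using assms by (simp add: abs_div powr_divide)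
  then show ?thesis using assms by simp
qed

lemma pw_scale_up:
  fixes f s p P :: real
  assumes "s > 0" "0 \<le> p" "p \<le> P"
  shows "\<bar>f\<bar> powr p \<le> max 1 s powr P * \<bar>f / s\<bar> powr p"
proof -
  have "\<bar>f\<bar> powr p = s powr p * \<bar>f / s\<bar> powr p"
    using assms by (intro scale_eq) auto
  also have "s powr p \<le> max 1 s powr P"
  proof (cases "s \<ge> 1")
    case True then show ?thesis using assms by (simp add: powr_mono)
  next
    case False
    then have "s powr p \<le> 1" using assms by (intro powr_le1) auto
    also have "1 \<le> max 1 s powr P" using assms by (intro ge_one_powr_ge_zero) auto
    finally show ?thesis .
  qed
  then have "s powr p * \<bar>f / s\<bar> powr p \<le> max 1 s powr P * \<bar>f / s\<bar> powr p"
    by (rule mult_right_mono) simp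
  finally show ?thesis .
qed

lemma pw_scale_down:
  fixes f s p a :: real
  assumes "s \<ge> 1" "a \<le> p"
  shows "s powr a * \<bar>f / s\<bar> powr p \<le> \<bar>f\<bar> powr p"
proof -
  have "\<bar>f\<bar> powr p = s powr p * \<bar>f / s\<bar> powr p"
    using assms by (intro scale_eq) auto
  moreover have "s powr a \<le> s powr p" using assms by (simp add: powr_mono)
  ultimately show ?thesis by (simp add: mult_right_mono)
qed

lemma pw_alpha:
  fixes v s a :: real
  assumes "s \<ge> 1" "2 \<le> a"
  shows "\<bar>v / s\<bar> powr a \<le> s powr (-2) * \<bar>v\<bar> powr a"
proof -
  have "\<bar>v / s\<bar> powr a = \<bar>v\<bar> powr a / s powr a"
    using assms by (simp add: abs_div powr_divide)
  also have "\<dots> \<le> \<bar>v\<bar> powr a / s powr 2"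
  proof (intro divide_left_mono)
    show "s powr 2 \<le> s powr a" by (rule powr_mono) (use assms in auto)
  qed (use assms in auto)
  also have "\<dots> = s powr (-2) * \<bar>v\<bar> powr a"
    using assms by (simp add: powr_minus divide_inverse)
  finally show ?thesis .
qed

lemma pw_pow_le:
  fixes v p a :: real
  assumes "0 \<le> p" "p \<le> a"
  shows "\<bar>v\<bar> powr p \<le> \<bar>v\<bar> powr a + 1"
proof (cases "\<bar>v\<bar> \<ge> 1")
  case True then show ?thesis using assms powr_mono[of p a "\<bar>v\<bar>"] by linarith
next
  case False then have "\<bar>v\<bar> powr p \<le> 1" using assms by (intro powr_le1) auto
  then show ?thesis using powr_ge_zero[of "\<bar>v\<bar>" a] by linarith
qed

lemma pw_B:
  fixes v d p :: real
  assumes "2 \<le> p"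
  shows "npow \<bar>v\<bar> (p - 2) * d\<^sup>2 \<le> \<bar>v\<bar> powr p + \<bar>d\<bar> powr p"
proof (cases "p = 2")
  case True then show ?thesis by (simp add: npow_def powr_numeral)
next
  case False
  then have e: "p - 2 > 0" using assms by simp
  have d2: "d\<^sup>2 = \<bar>d\<bar> powr 2" by (simp add: powr_numeral)
  have "npow \<bar>v\<bar> (p - 2) = \<bar>v\<bar> powr (p - 2)" using e by (simp add: npow_def)
  then have "npow \<bar>v\<bar> (p - 2) * d\<^sup>2 = \<bar>v\<bar> powr (p - 2) * \<bar>d\<bar> powr 2"
    by (subst d2) (rule arg_cong[where f="\<lambda>z. z * _"])
  also have "\<dots> \<le> \<bar>v\<bar> powr p + \<bar>d\<bar> powr p"
  proof (cases "\<bar>v\<bar> \<le> \<bar>d\<bar>")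
    case True
    then have "\<bar>v\<bar> powr (p - 2) \<le> \<bar>d\<bar> powr (p - 2)" using e by (simp add: powr_mono2)
    then have "\<bar>v\<bar> powr (p - 2) * \<bar>d\<bar> powr 2 \<le> \<bar>d\<bar> powr (p - 2) * \<bar>d\<bar> powr 2"
      by (rule mult_right_mono) simp
    also have "\<dots> = \<bar>d\<bar> powr p" using powr_add[of "\<bar>d\<bar>" "p - 2" 2, symmetric] by simp
    finally show ?thesis using powr_ge_zero[of "\<bar>v\<bar>" p] by linarith
  next
    case False
    then have "\<bar>d\<bar> powr 2 \<le> \<bar>v\<bar> powr 2" using abs_le_square_iff[of d v] by simp
    then have "\<bar>v\<bar> powr (p - 2) * \<bar>d\<bar> powr 2 \<le> \<bar>v\<bar> powr (p - 2) * \<bar>v\<bar> powr 2"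
      by (rule mult_left_mono) simp
    also have "\<dots> = \<bar>v\<bar> powr p" using powr_add[of "\<bar>v\<bar>" "p - 2" 2, symmetric] by simp
    finally show ?thesis using powr_ge_zero[of "\<bar>d\<bar>" p] by linarith
  qed
  finally show ?thesis .
qed

lemma pw_young:
  fixes c1 t a :: real
  assumes "c1 \<ge> 0" "a > 1"
  shows "c1 * \<bar>t\<bar> \<le> c1 powr (a / (a - 1)) + \<bar>t\<bar> powr a"
proof (cases "c1 \<le> \<bar>t\<bar> powr (a - 1)")
  case True
  then have "c1 * \<bar>t\<bar> \<le> \<bar>t\<bar> powr (a - 1) * \<bar>t\<bar>" by (rule mult_right_mono) simp
  also have "\<dots> = \<bar>t\<bar> powr a"
    by (simp add: powr_m1)
  finally show ?thesis using powr_ge_zero[of c1 "a / (a - 1)"] by linarith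
next
  case False
  then have c1p: "c1 > 0" using powr_ge_zero[of "\<bar>t\<bar>" "a - 1"] by linarith
  have "\<bar>t\<bar> = (\<bar>t\<bar> powr (a - 1)) powr (1 / (a - 1))"
    using assms by (simp add: powr_powr)
  also have "\<dots> \<le> c1 powr (1 / (a - 1))"
    using False assms by (intro powr_mono2) auto
  finally have "c1 * \<bar>t\<bar> \<le> c1 * c1 powr (1 / (a - 1))" using c1p by simp
  also have "\<dots> = c1 powr (a / (a - 1))"
  proof -
    have "a / (a - 1) = 1 + 1 / (a - 1)" using assms by (simp add: field_simps)
    then show ?thesis using c1p by (subst \<open>a / (a - 1) = 1 + 1 / (a - 1)\<close>) (simp add: powr_add)
  qed
  finally show ?thesis using powr_ge_zero[of "\<bar>t\<bar>" a] by linarith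
qed

lemma pw_c:
  fixes c c0 c1 t a :: real
  assumes "\<bar>c\<bar> \<le> c0 * npow \<bar>t\<bar> (a - 1) + c1" "a > 1" "c0 \<ge> 0" "c1 \<ge> 0"
  shows "\<bar>c * t\<bar> \<le> c0 * \<bar>t\<bar> powr a + c1 powr (a / (a - 1)) + \<bar>t\<bar> powr a"
proof -
  have "\<bar>c * t\<bar> = \<bar>c\<bar> * \<bar>t\<bar>" by (simp add: abs_mult)
  also have "\<dots> \<le> (c0 * \<bar>t\<bar> powr (a - 1) + c1) * \<bar>t\<bar>"
    using assms by (intro mult_right_mono) (auto simp: npow_def)
  also have "\<dots> = c0 * (\<bar>t\<bar> powr (a - 1) * \<bar>t\<bar>) + c1 * \<bar>t\<bar>" by (simp add: algebra_simps)
  also have "\<bar>t\<bar> powr (a - 1) * \<bar>t\<bar> = \<bar>t\<bar> powr a"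
    by (simp add: powr_m1)
  finally show ?thesis using pw_young[OF assms(4,2), of t] by linarith
qed

lemma pw_S:
  fixes p s v d :: real
  assumes p: "2 \<le> p" and s: "1 \<le> s"
  shows "abs (npow \<bar>v\<bar> ((p / (p - 1)) * (p - 2) / (p / (p - 1))) * d /
            s powr ((p / (p - 1)) * (p - 2) / (p / (p - 1)) + 1)) powr (p / (p - 1))
         \<le> s powr (-2) * (npow \<bar>v\<bar> (p - 2) * d\<^sup>2 + \<bar>v\<bar> powr p)"
proof -
  define \<beta> where "\<beta> = p / (p - 1)"
  have \<beta>pos: "\<beta> > 0" using p by (simp add: \<beta>_def)
  have \<beta>2: "\<beta> \<le> 2" using p by (simp add: \<beta>_def field_simps)
  have \<beta>1: "\<beta> \<ge> 1" using p by (simp add: \<beta>_def field_simps)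
  have e: "\<beta> * (p - 2) / \<beta> = p - 2" using \<beta>pos by simp
  have pe: "(p - 2 + 1) * \<beta> = p" using p by (simp add: \<beta>_def field_simps)
  let ?a = "\<bar>v\<bar>" and ?b = "\<bar>d\<bar>"
  have sp: "s powr (- p) \<le> s powr (-2)" using s p by (simp add: powr_mono)
  have "\<bar>npow ?a (p - 2) * d / s powr (p - 2 + 1)\<bar> powr \<beta>
        = (\<bar>npow ?a (p - 2)\<bar> * ?b) powr \<beta> * s powr (- p)"
  proof -
    have "\<bar>npow ?a (p - 2) * d / s powr (p - 2 + 1)\<bar> = (\<bar>npow ?a (p - 2)\<bar> * ?b) / s powr (p - 2 + 1)"
      using s by (simp add: abs_mult abs_div)
    then have "\<bar>npow ?a (p - 2) * d / s powr (p - 2 + 1)\<bar> powr \<beta>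
        = (\<bar>npow ?a (p - 2)\<bar> * ?b) powr \<beta> / (s powr (p - 2 + 1)) powr \<beta>"
      using s by (simp add: powr_divide)
    also have "(s powr (p - 2 + 1)) powr \<beta> = s powr p" using s pe by (simp add: powr_powr)
    finally show ?thesis using s by (simp add: powr_minus divide_inverse)
  qed
  also have "\<dots> \<le> (npow ?a (p - 2) * d\<^sup>2 + ?a powr p) * s powr (-2)"
  proof (rule mult_mono)
    show "(\<bar>npow ?a (p - 2)\<bar> * ?b) powr \<beta> \<le> npow ?a (p - 2) * d\<^sup>2 + ?a powr p"
    proof (cases "p = 2")
      case True
      then have "\<beta> = 2" by (simp add: \<beta>_def)
      then show ?thesis using True by (simp add: npow_def powr_numeral)
    next
      case False
      then have ep: "p - 2 > 0" using p by simp
      have np: "npow ?a (p - 2) = ?a powr (p - 2)" using ep by (simp add: npow_def)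
      have eq1: "(?a powr (p - 2) * ?b) powr \<beta> = ?a powr ((p - 2) * \<beta>) * ?b powr \<beta>"
        by (simp add: powr_mult powr_powr)
      have "?a powr ((p - 2) * \<beta>) * ?b powr \<beta> \<le> ?a powr (p - 2) * d\<^sup>2 + ?a powr p"
      proof (cases "?b \<le> ?a")
        case True
        have "?a powr ((p - 2) * \<beta>) * ?b powr \<beta> \<le> ?a powr ((p - 2) * \<beta>) * ?a powr \<beta>"
        proof (rule mult_left_mono)
          show "?b powr \<beta> \<le> ?a powr \<beta>" using powr_mono2[OF less_imp_le[OF \<beta>pos] abs_ge_zero True] .
        qed simp
        also have "\<dots> = ?a powr p"
        proof -
          have ex2: "(p - 2) * \<beta> + \<beta> = p" using pe by (simp add: algebra_simps)
          have "?a powr ((p - 2) * \<beta> + \<beta>) = ?a powr ((p - 2) * \<beta>) * ?a powr \<beta>" by (rule powr_add)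
          from this[unfolded ex2] show ?thesis by (rule sym)
        qed
        finally have "?a powr ((p - 2) * \<beta>) * ?b powr \<beta> \<le> ?a powr p" .
        moreover have "0 \<le> ?a powr (p - 2) * d\<^sup>2" by simp
        moreover have "0 \<le> ?a powr p" by simp
        ultimately show ?thesis by linarith
      next
        case False
        show ?thesis
        proof (cases "v = 0")
          case True then show ?thesis using ep \<beta>pos by simp
        next
          case v0: False
          have ex: "(p - 2) * \<beta> = (p - 2) + (2 - \<beta>)" using p by (simp add: \<beta>_def field_simps)
          have q1: "?a powr ((p - 2) * \<beta>) * ?b powr \<beta> = ?a powr (p - 2) * (?a powr (2 - \<beta>) * ?b powr \<beta>)"
            by (metis ex powr_add mult.assoc)
          have q2: "?a powr (2 - \<beta>) * ?b powr \<beta> \<le> ?b powr (2 - \<beta>) * ?b powr \<beta>"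
            using False \<beta>2 by (intro mult_right_mono powr_mono2) auto
          have q3: "?b powr (2 - \<beta>) * ?b powr \<beta> = ?b powr 2"
            by (metis powr_add diff_add_cancel)
          have q4: "?b powr 2 = d\<^sup>2" by (simp add: powr_numeral)
          have q5: "?a powr (p - 2) * (?a powr (2 - \<beta>) * ?b powr \<beta>) \<le> ?a powr (p - 2) * d\<^sup>2"
            using q2 q3 q4 by (intro mult_left_mono) auto
          from q1 q5 have "?a powr ((p - 2) * \<beta>) * ?b powr \<beta> \<le> ?a powr (p - 2) * d\<^sup>2"
            by (rule ord_eq_le_trans)
          moreover have "0 \<le> ?a powr p" by simp
          ultimately show ?thesis by linarith
        qed
      qed
      then show ?thesis using np eq1 by simp
    qed
  qed (use s sp in \<open>auto simp: npow_def intro!: add_nonneg_nonneg mult_nonneg_nonneg\<close>)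
  finally have main: "\<bar>npow ?a (p - 2) * d / s powr (p - 2 + 1)\<bar> powr \<beta>
     \<le> s powr (-2) * (npow ?a (p - 2) * d\<^sup>2 + ?a powr p)" by (simp add: mult.commute)
  show ?thesis unfolding \<beta>_def[symmetric] e using main .
qed


lemma inf_half:
  fixes Q :: "real \<Rightarrow> bool"
  assumes "Inf {s. s > 0 \<and> Q s} \<ge> 2"
  shows "\<not> Q (Inf {s. s > 0 \<and> Q s} / 2)"
proof
  let ?t = "Inf {s. s > 0 \<and> Q s}"
  assume "Q (?t / 2)"
  then have "?t / 2 \<in> {s. s > 0 \<and> Q s}" using assms by auto
  then have "?t \<le> ?t / 2" by (rule cInf_lower) (auto intro: bdd_belowI[of _ 0])
  then show False using assms by linarith
qed

lemma lux_lower: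
  fixes \<Omega> :: "(real^'n::finite) set" and p f :: "real^'n \<Rightarrow> real"
  assumes pm: "p \<in> borel_measurable (lebesgue_on \<Omega>)" and fm: "f \<in> borel_measurable (lebesgue_on \<Omega>)"
    and pa: "AE x in lebesgue_on \<Omega>. a \<le> p x" and L: "lux \<Omega> p f \<ge> 2"
  shows "modular \<Omega> p f \<ge> ennreal ((lux \<Omega> p f / 2) powr a)"
proof -
  define s where "s = lux \<Omega> p f / 2"
  have s1: "s \<ge> 1" using L by (simp add: s_def)
  have "\<not> modular \<Omega> p (\<lambda>x. f x / s) \<le> 1"
    using inf_half[of "\<lambda>s. modular \<Omega> p (\<lambda>x. f x / s) \<le> 1"] L unfolding s_def lux_def by simp
  then have gt: "1 \<le> modular \<Omega> p (\<lambda>x. f x / s)" by simp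
  have "ennreal (s powr a) = ennreal (s powr a) * 1" by simp
  also have "\<dots> \<le> ennreal (s powr a) * modular \<Omega> p (\<lambda>x. f x / s)"
    by (rule mult_left_mono[OF gt]) simp
  also have "\<dots> = (\<integral>\<^sup>+x. ennreal (s powr a) * ennreal (\<bar>f x / s\<bar> powr p x) \<partial>lebesgue_on \<Omega>)"
    unfolding modular_def using pm fm by (subst nn_integral_cmult) auto
  also have "\<dots> \<le> modular \<Omega> p f" unfolding modular_def
  proof (rule nn_integral_mono_AE)
    show "AE x in lebesgue_on \<Omega>. ennreal (s powr a) * ennreal (\<bar>f x / s\<bar> powr p x) \<le> ennreal (\<bar>f x\<bar> powr p x)"
      using pa
    proof eventually_elim
      case (elim x)
      have "ennreal (s powr a) * ennreal (\<bar>f x / s\<bar> powr p x) = ennreal (s powr a * \<bar>f x / s\<bar> powr p x)"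
        by (simp add: ennreal_mult)
      also have "\<dots> \<le> ennreal (\<bar>f x\<bar> powr p x)"
        by (rule ennreal_leI) (rule pw_scale_down[OF s1 elim])
      finally show ?case .
    qed
  qed
  finally show ?thesis unfolding s_def .
qed

lemma lp_int:
  fixes \<Omega> :: "(real^'n::finite) set" and p f :: "real^'n \<Rightarrow> real"
  assumes v: "var_Lp \<Omega> p f" and pm: "p \<in> borel_measurable (lebesgue_on \<Omega>)"
    and pb: "AE x in lebesgue_on \<Omega>. 0 \<le> p x \<and> p x \<le> P"
  shows "integrable (lebesgue_on \<Omega>) (\<lambda>x. \<bar>f x\<bar> powr p x)"
proof -
  obtain s where s: "s > 0" "modular \<Omega> p (\<lambda>x. f x / s) < \<infinity>"
    and fm: "f \<in> borel_measurable (lebesgue_on \<Omega>)" using v unfolding var_Lp_def by auto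
  have "(\<integral>\<^sup>+x. ennreal (\<bar>f x\<bar> powr p x) \<partial>lebesgue_on \<Omega>)
      \<le> (\<integral>\<^sup>+x. ennreal (max 1 s powr P) * ennreal (\<bar>f x / s\<bar> powr p x) \<partial>lebesgue_on \<Omega>)"
  proof (rule nn_integral_mono_AE)
    show "AE x in lebesgue_on \<Omega>. ennreal (\<bar>f x\<bar> powr p x) \<le> ennreal (max 1 s powr P) * ennreal (\<bar>f x / s\<bar> powr p x)"
      using pb
    proof eventually_elim
      case (elim x)
      have "ennreal (\<bar>f x\<bar> powr p x) \<le> ennreal (max 1 s powr P * \<bar>f x / s\<bar> powr p x)"
        by (rule ennreal_leI) (rule pw_scale_up, use s elim in auto)
      also have "\<dots> = ennreal (max 1 s powr P) * ennreal (\<bar>f x / s\<bar> powr p x)"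
        by (simp add: ennreal_mult)
      finally show ?case .
    qed
  qed
  also have "\<dots> = ennreal (max 1 s powr P) * modular \<Omega> p (\<lambda>x. f x / s)"
    unfolding modular_def using pm fm by (subst nn_integral_cmult) auto
  also have "\<dots> < \<infinity>" using s by (simp add: ennreal_mult_less_top)
  finally show ?thesis
    by (intro integrableI_nonneg) (use pm fm in auto)
qed

lemma pw_norm:
  fixes f :: "'n::finite \<Rightarrow> real" and p P :: real
  assumes "0 \<le> p" "p \<le> P"
  shows "norm (\<chi> i. f i) powr p \<le> real CARD('n) powr P * (\<Sum>j\<in>UNIV. \<bar>f j\<bar> powr p)"
proof -
  obtain k where k: "\<And>j. \<bar>f j\<bar> \<le> \<bar>f k\<bar>"
  proof -
    have "Max (range (\<lambda>j. \<bar>f j\<bar>)) \<in> range (\<lambda>j. \<bar>f j\<bar>)" by (intro Max_in) auto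
    then obtain k where "Max (range (\<lambda>j. \<bar>f j\<bar>)) = \<bar>f k\<bar>" by (rule rangeE)
    moreover have "\<bar>f j\<bar> \<le> Max (range (\<lambda>j. \<bar>f j\<bar>))" for j by (rule Max_ge) auto
    ultimately show ?thesis using that by metis
  qed
  have N1: "real CARD('n) \<ge> 1" by (simp add: Suc_le_eq)
  have "norm (\<chi> i. f i) \<le> (\<Sum>j\<in>UNIV. \<bar>f j\<bar>)"
    using norm_le_l1_cart[of "\<chi> i. f i"] by simp
  also have "\<dots> \<le> real CARD('n) * \<bar>f k\<bar>"
    using sum_bounded_above[of UNIV "\<lambda>j. \<bar>f j\<bar>" "\<bar>f k\<bar>"] k by simp
  finally have n1: "norm (\<chi> i. f i) \<le> real CARD('n) * \<bar>f k\<bar>" .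
  have "norm (\<chi> i. f i) powr p \<le> (real CARD('n) * \<bar>f k\<bar>) powr p"
    using n1 assms by (intro powr_mono2) auto
  also have "\<dots> = real CARD('n) powr p * \<bar>f k\<bar> powr p" by (simp add: powr_mult)
  also have "\<dots> \<le> real CARD('n) powr P * \<bar>f k\<bar> powr p"
    using N1 assms by (intro mult_right_mono powr_mono) auto
  also have "\<bar>f k\<bar> powr p \<le> (\<Sum>j\<in>UNIV. \<bar>f j\<bar> powr p)"
    by (rule member_le_sum) auto
  then have "real CARD('n) powr P * \<bar>f k\<bar> powr p \<le> real CARD('n) powr P * (\<Sum>j\<in>UNIV. \<bar>f j\<bar> powr p)"
    by (rule mult_left_mono) simp
  finally show ?thesis .
qed

lemma powr_at_top:
  fixes e k :: real assumes e: "e > 0" and k: "k > 0"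
  shows "filterlim (\<lambda>t. (k * t) powr e * k) at_top at_top"
proof -
  have "filterlim (\<lambda>t. exp (e * ln (k * t))) at_top at_top"
  proof (rule filterlim_compose[OF exp_at_top])
    have "filterlim (\<lambda>t. k * t) at_top at_top"
      using filterlim_tendsto_pos_mult_at_top[OF tendsto_const k filterlim_ident] .
    then have "filterlim (\<lambda>t. ln (k * t)) at_top at_top"
      by (rule filterlim_compose[OF ln_at_top])
    then show "filterlim (\<lambda>t. e * ln (k * t)) at_top at_top"
      using filterlim_tendsto_pos_mult_at_top[OF tendsto_const e] by blast
  qed
  then have lim: "filterlim (\<lambda>t. exp (e * ln (k * t)) * k) at_top at_top"
    using filterlim_at_top_mult_tendsto_pos[OF tendsto_const k] by blast
  have ev: "eventually (\<lambda>t. exp (e * ln (k * t)) * k = (k * t) powr e * k) at_top"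
    using eventually_gt_at_top[of 0] by eventually_elim (use k in \<open>simp add: powr_def\<close>)
  show ?thesis using filterlim_cong[OF refl refl ev] lim by simp
qed

lemma nrm_vec: fixes g :: "'n::finite \<Rightarrow> real" shows "norm (\<chi> i. g i) = sqrt (\<Sum>i\<in>UNIV. (g i)\<^sup>2)"
  by (simp add: norm_vec_def L2_set_def)

theorem lemma4p1:
  fixes \<Omega> :: "(real^'n) set"
    and p0 p1 \<alpha> c0 c1 c2 :: "real^'n \<Rightarrow> real"
    and c :: "real^'n \<Rightarrow> real \<Rightarrow> real"
  assumes n3: "CARD('n) \<ge> 3"
    and dom: "lipschitz_domain \<Omega>"
    and p0_meas: "p0 \<in> borel_measurable (lebesgue_on \<Omega>)"
    and p1_meas: "p1 \<in> borel_measurable (lebesgue_on \<Omega>)"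
    and p0_bd: "\<exists>P. (AE x in lebesgue_on \<Omega>. 2 \<le> p0 x \<and> p0 x \<le> P)"
    and p1_bd: "\<exists>a P. 1 < a \<and> (AE x in lebesgue_on \<Omega>. a \<le> p1 x \<and> p1 x \<le> P)"
    and p0_C1: "C1_closure \<Omega> p0"
    and p1_C0: "continuous_on (closure \<Omega>) p1"
    and \<alpha>_meas: "\<alpha> \<in> borel_measurable (lebesgue_on \<Omega>)"
    and \<alpha>_bd: "\<exists>P. (AE x in lebesgue_on \<Omega>. 1 \<le> \<alpha> x \<and> \<alpha> x \<le> P)"
    and \<alpha>_p0: "\<exists>\<epsilon>>0. (AE x in lebesgue_on \<Omega>. \<alpha> x \<ge> p0 x + \<epsilon>)"
    and c_meas: "\<forall>\<tau>. (\<lambda>x. c x \<tau>) \<in> borel_measurable (lebesgue_on \<Omega>)"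
    and c_cont: "AE x in lebesgue_on \<Omega>. continuous_on UNIV (c x)"
    and c_growth: "AE x in lebesgue_on \<Omega>. \<forall>\<tau>. \<bar>c x \<tau>\<bar> \<le> c0 x * npow \<bar>\<tau>\<bar> (\<alpha> x - 1) + c1 x"
    and c_coerc: "AE x in lebesgue_on \<Omega>. \<forall>\<tau>. c x \<tau> * \<tau> \<ge> c2 x * \<bar>\<tau>\<bar> powr \<alpha> x"
    and c0_Linf: "c0 \<in> borel_measurable (lebesgue_on \<Omega>) \<and> (\<exists>B. AE x in lebesgue_on \<Omega>. \<bar>c0 x\<bar> \<le> B)"
    and c2_Linf: "c2 \<in> borel_measurable (lebesgue_on \<Omega>) \<and> (\<exists>B. AE x in lebesgue_on \<Omega>. \<bar>c2 x\<bar> \<le> B)"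
    and c1_L: "var_Lp \<Omega> (\<lambda>x. \<alpha> x / (\<alpha> x - 1)) c1"
    and c_nonneg: "AE x in lebesgue_on \<Omega>. c0 x \<ge> 0 \<and> c1 x \<ge> 0 \<and> c2 x \<ge> 0"
    and c2_pos: "\<exists>C>0. AE x in lebesgue_on \<Omega>. c2 x \<ge> C"
  shows "\<exists>M>0. \<exists>lam0 lam1 :: real \<Rightarrow> real.
           continuous_on {0..} lam0 \<and> mono_on {0..} lam0 \<and> filterlim lam0 at_top at_top \<and>
           continuous_on {0..} lam1 \<and> mono_on {0..} lam1 \<and> filterlim lam1 at_top at_top \<and>
           (\<forall>u Du. (\<forall>i. weak_pderiv \<Omega> u i (Du i)) \<and>
                    W0 \<Omega> p0 u Du \<and> W0 \<Omega> p1 u Du \<and> var_Lp \<Omega> \<alpha> u \<and>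
                    W0norm \<Omega> p1 Du \<ge> M \<and> Snorm \<Omega> p0 \<alpha> u Du \<ge> M
              \<longrightarrow> Tpair \<Omega> p0 p1 c u Du \<ge>
                    lam0 (W0norm \<Omega> p1 Du) * W0norm \<Omega> p1 Du
                    + lam1 (Snorm \<Omega> p0 \<alpha> u Du) * Snorm \<Omega> p0 \<alpha> u Du)"
proof -
  let ?L = "lebesgue_on \<Omega>"
  define N where "N = real CARD('n)"
  have N1: "N \<ge> 1" unfolding N_def using n3 by simp
  have \<Omega>o: "open \<Omega>" and \<Omega>b: "bounded \<Omega>" using dom by (auto simp: lipschitz_domain_def)
  have \<Omega>lm: "\<Omega> \<in> lmeasurable" using lmeasurable_open[OF \<Omega>b \<Omega>o] .
  interpret fin: finite_measure ?L using finite_measure_lebesgue_on[OF \<Omega>lm] .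
  obtain P0 where P0: "AE x in ?L. 2 \<le> p0 x \<and> p0 x \<le> P0" using p0_bd by blast
  obtain a1 P1 where a1: "1 < a1" and P1: "AE x in ?L. a1 \<le> p1 x \<and> p1 x \<le> P1" using p1_bd by blast
  obtain Pa where Pa: "AE x in ?L. 1 \<le> \<alpha> x \<and> \<alpha> x \<le> Pa" using \<alpha>_bd by blast
  obtain \<epsilon> where \<epsilon>: "\<epsilon> > 0" "AE x in ?L. \<alpha> x \<ge> p0 x + \<epsilon>" using \<alpha>_p0 by blast
  obtain B0 where B0: "AE x in ?L. \<bar>c0 x\<bar> \<le> B0" using c0_Linf by blast
  obtain Ct where Ct: "Ct > 0" "AE x in ?L. c2 x \<ge> Ct" using c2_pos by blast
  have [measurable]: "c0 \<in> borel_measurable ?L" "c2 \<in> borel_measurable ?L" using c0_Linf c2_Linf by auto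
  have [measurable]: "c1 \<in> borel_measurable ?L" using c1_L by (simp add: var_Lp_def)
  have [measurable]: "p0 \<in> borel_measurable ?L" "p1 \<in> borel_measurable ?L" "\<alpha> \<in> borel_measurable ?L"
    using p0_meas p1_meas \<alpha>_meas by auto
  have AEall: "AE x in ?L. 2 \<le> p0 x \<and> p0 x \<le> P0 \<and> a1 \<le> p1 x \<and> p1 x \<le> P1 \<and> 1 \<le> \<alpha> x \<and> \<alpha> x \<le> Pa
      \<and> \<alpha> x \<ge> p0 x + \<epsilon> \<and> \<bar>c0 x\<bar> \<le> B0 \<and> c2 x \<ge> Ct \<and> c0 x \<ge> 0 \<and> c1 x \<ge> 0 \<and> c2 x \<ge> 0
      \<and> (\<forall>\<tau>. \<bar>c x \<tau>\<bar> \<le> c0 x * npow \<bar>\<tau>\<bar> (\<alpha> x - 1) + c1 x)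
      \<and> (\<forall>\<tau>. c x \<tau> * \<tau> \<ge> c2 x * \<bar>\<tau>\<bar> powr \<alpha> x) \<and> 2 < \<alpha> x \<and> 0 \<le> p1 x"
    using P0 P1 Pa \<epsilon>(2) B0 Ct(2) c_nonneg c_growth c_coerc by eventually_elim (use \<epsilon>(1) a1 in auto)
  define mu where "mu = measure ?L (space ?L)"
  have mu0: "mu \<ge> 0" unfolding mu_def by simp
  define K where "K = max 1 ((N + 1) / Ct)"
  have K1: "K \<ge> 1" unfolding K_def by simp
  define e where "e = a1 - 1"
  have e0: "e > 0" using a1 by (simp add: e_def)
  define k0 where "k0 = 1 / (2 * N)"
  have k0: "k0 > 0" using N1 by (simp add: k0_def)
  define lam0 where "lam0 t = (k0 * t) powr e * k0" for t
  define lam1 where "lam1 t = (1 / (8 * K)) * t" for t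
  define M where "M = max (2 * N) (max 2 (sqrt (8 * N * mu)))"
  have M2: "M \<ge> 2" "M \<ge> 2 * N" "M \<ge> sqrt (8 * N * mu)" unfolding M_def by auto
  have key: "Tpair \<Omega> p0 p1 c u Du \<ge> lam0 (W0norm \<Omega> p1 Du) * W0norm \<Omega> p1 Du
                    + lam1 (Snorm \<Omega> p0 \<alpha> u Du) * Snorm \<Omega> p0 \<alpha> u Du"
    if H: "(\<forall>i. weak_pderiv \<Omega> u i (Du i)) \<and>
                    W0 \<Omega> p0 u Du \<and> W0 \<Omega> p1 u Du \<and> var_Lp \<Omega> \<alpha> u \<and>
                    W0norm \<Omega> p1 Du \<ge> M \<and> Snorm \<Omega> p0 \<alpha> u Du \<ge> M" for u Du
  proof -
    have W0a: "W0 \<Omega> p0 u Du" and W1a: "W0 \<Omega> p1 u Du" and vLa: "var_Lp \<Omega> \<alpha> u"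
      and tM: "W0norm \<Omega> p1 Du \<ge> M" and sM: "Snorm \<Omega> p0 \<alpha> u Du \<ge> M" using H by auto
    have vu0: "var_Lp \<Omega> p0 u" and vD0: "\<And>i. var_Lp \<Omega> p0 (Du i)" using W0a by (auto simp: W0_def)
    have vD1: "\<And>i. var_Lp \<Omega> p1 (Du i)" using W1a by (auto simp: W0_def)
    have um[measurable]: "u \<in> borel_measurable ?L" using vLa by (simp add: var_Lp_def)
    have Dm[measurable]: "Du i \<in> borel_measurable ?L" for i using vD1[of i] by (simp add: var_Lp_def)
    have \<Omega>s: "\<Omega> \<in> sets lebesgue" using \<Omega>lm by (simp add: fmeasurableD)
    have cum[measurable]: "(\<lambda>x. c x (u x)) \<in> borel_measurable ?L"
      by (rule carath_meas[OF \<Omega>s _ c_cont um]) (use c_meas in auto)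
    have "AE x in ?L. 0 \<le> \<alpha> x \<and> \<alpha> x \<le> Pa" using AEall by eventually_elim auto
    then have iUa: "integrable ?L (\<lambda>x. \<bar>u x\<bar> powr \<alpha> x)" by (rule lp_int[OF vLa \<alpha>_meas])
    have AEp0: "AE x in ?L. 0 \<le> p0 x \<and> p0 x \<le> P0" using AEall by eventually_elim auto
    have iUp0: "integrable ?L (\<lambda>x. \<bar>u x\<bar> powr p0 x)" by (rule lp_int[OF vu0 p0_meas AEp0])
    have iDp0: "integrable ?L (\<lambda>x. \<bar>Du i x\<bar> powr p0 x)" for i by (rule lp_int[OF vD0 p0_meas AEp0])
    have AEp1: "AE x in ?L. 0 \<le> p1 x \<and> p1 x \<le> P1" using AEall by eventually_elim auto
    have iDp1: "integrable ?L (\<lambda>x. \<bar>Du i x\<bar> powr p1 x)" for i by (rule lp_int[OF vD1 p1_meas AEp1])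
    have AEq: "AE x in ?L. 0 \<le> \<alpha> x / (\<alpha> x - 1) \<and> \<alpha> x / (\<alpha> x - 1) \<le> 2"
      using AEall by eventually_elim (auto simp: divide_simps)
    have iC1: "integrable ?L (\<lambda>x. \<bar>c1 x\<bar> powr (\<alpha> x / (\<alpha> x - 1)))"
      by (rule lp_int[OF c1_L _ AEq]) measurable
    have iA: "integrable ?L (\<lambda>x. norm (\<chi> i. Du i x) powr p1 x)"
    proof -
      have h1: "integrable ?L (\<lambda>x. N powr P1 * (\<Sum>j\<in>UNIV. \<bar>Du j x\<bar> powr p1 x))"
        using iDp1 by (intro integrable_mult_right integrable_sum) auto
      have h2: "(\<lambda>x. norm (\<chi> i. Du i x) powr p1 x) \<in> borel_measurable ?L"
        unfolding nrm_vec by measurable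
      have h3: "AE x in ?L. norm (norm (\<chi> i. Du i x) powr p1 x) \<le> norm (N powr P1 * (\<Sum>j\<in>UNIV. \<bar>Du j x\<bar> powr p1 x))"
        using AEall
      proof eventually_elim
        case (elim x)
        have "norm (\<chi> i. Du i x) powr p1 x \<le> N powr P1 * (\<Sum>j\<in>UNIV. \<bar>Du j x\<bar> powr p1 x)"
          unfolding N_def using pw_norm[of "p1 x" P1 "\<lambda>i. Du i x"] elim a1 by auto
        moreover have "0 \<le> N powr P1 * (\<Sum>j\<in>UNIV. \<bar>Du j x\<bar> powr p1 x)" by (simp add: sum_nonneg)
        ultimately show ?case by simp
      qed
      show ?thesis by (rule Bochner_Integration.integrable_bound[OF h1 h2 h3])
    qed
    define Bi where "Bi i x = npow \<bar>u x\<bar> (p0 x - 2) * (Du i x)\<^sup>2" for i x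
    have Bi0: "Bi i x \<ge> 0" for i x unfolding Bi_def npow_def by simp
    have iB: "integrable ?L (Bi i)" for i
    proof -
      have h1: "integrable ?L (\<lambda>x. \<bar>u x\<bar> powr p0 x + \<bar>Du i x\<bar> powr p0 x)"
        using iUp0 iDp0 by auto
      have h2: "Bi i \<in> borel_measurable ?L" unfolding Bi_def npow_def by measurable
      have h3: "AE x in ?L. norm (Bi i x) \<le> norm (\<bar>u x\<bar> powr p0 x + \<bar>Du i x\<bar> powr p0 x)"
        using AEall
      proof eventually_elim
        case (elim x)
        have "Bi i x \<le> \<bar>u x\<bar> powr p0 x + \<bar>Du i x\<bar> powr p0 x"
          unfolding Bi_def using pw_B[of "p0 x" "u x" "Du i x"] elim by auto
        then show ?case using Bi0[of i x] by simp
      qed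
      show ?thesis by (rule Bochner_Integration.integrable_bound[OF h1 h2 h3])
    qed
    have iCc: "integrable ?L (\<lambda>x. c x (u x) * u x)"
    proof -
      have h1: "integrable ?L (\<lambda>x. (B0 + 1) * \<bar>u x\<bar> powr \<alpha> x + \<bar>c1 x\<bar> powr (\<alpha> x / (\<alpha> x - 1)))"
        using iUa iC1 by auto
      have h2: "(\<lambda>x. c x (u x) * u x) \<in> borel_measurable ?L" by measurable
      have h3: "AE x in ?L. norm (c x (u x) * u x) \<le> norm ((B0 + 1) * \<bar>u x\<bar> powr \<alpha> x + \<bar>c1 x\<bar> powr (\<alpha> x / (\<alpha> x - 1)))"
        using AEall
      proof eventually_elim
        case (elim x)
        have a1': "\<alpha> x > 1" using elim by linarith
        have "\<bar>c x (u x) * u x\<bar> \<le> c0 x * \<bar>u x\<bar> powr \<alpha> x + c1 x powr (\<alpha> x / (\<alpha> x - 1)) + \<bar>u x\<bar> powr \<alpha> x"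
          using pw_c[of "c x (u x)" "c0 x" "u x" "\<alpha> x" "c1 x"] elim a1' by auto
        also have "c0 x * \<bar>u x\<bar> powr \<alpha> x \<le> B0 * \<bar>u x\<bar> powr \<alpha> x"
          using elim by (intro mult_right_mono) auto
        finally have "\<bar>c x (u x) * u x\<bar> \<le> (B0 + 1) * \<bar>u x\<bar> powr \<alpha> x + \<bar>c1 x\<bar> powr (\<alpha> x / (\<alpha> x - 1))"
          using elim by (simp add: algebra_simps)
        moreover have "B0 \<ge> 0" using elim by linarith
        ultimately show ?case by simp
      qed
      show ?thesis by (rule Bochner_Integration.integrable_bound[OF h1 h2 h3])
    qed
    define a where "a = (LINT x|?L. \<bar>u x\<bar> powr \<alpha> x)"
    define b where "b i = (LINT x|?L. Bi i x)" for i
    define Cv where "Cv = (LINT x|?L. c x (u x) * u x)"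
    define A where "A = (LINT x|?L. norm (\<chi> i. Du i x) powr p1 x)"
    have a0: "a \<ge> 0" unfolding a_def by (rule integral_nonneg_AE) simp
    have b0: "b i \<ge> 0" for i unfolding b_def by (rule integral_nonneg_AE) (simp add: Bi0)
    have Tp: "Tpair \<Omega> p0 p1 c u Du = A + (\<Sum>i\<in>UNIV. b i) + Cv"
      unfolding Tpair_def A_def b_def Cv_def Bi_def by simp
    define t where "t = W0norm \<Omega> p1 Du"
    define lx where "lx j = lux \<Omega> p1 (Du j)" for j
    have tsum: "t = (\<Sum>j\<in>UNIV. lx j)" unfolding t_def lx_def W0norm_def by simp
    obtain i0 where i0: "\<And>j. lx j \<le> lx i0"
    proof -
      have "Max (range lx) \<in> range lx" by (intro Max_in) auto
      then obtain k where "Max (range lx) = lx k" by (rule rangeE)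
      moreover have "lx j \<le> Max (range lx)" for j by (rule Max_ge) auto
      ultimately show ?thesis using that by metis
    qed
    have "t \<le> N * lx i0" unfolding tsum N_def
      using sum_bounded_above[of UNIV lx "lx i0"] i0 by simp
    then have tN: "t / N \<le> lx i0" using N1 by (simp add: divide_le_eq mult.commute)
    have t2N: "t \<ge> 2 * N" using tM M2 unfolding t_def by linarith
    then have "2 \<le> t / N" using N1 by (simp add: le_divide_eq mult.commute)
    then have lx2: "lx i0 \<ge> 2" using tN by linarith
    have "modular \<Omega> p1 (Du i0) \<ge> ennreal ((lx i0 / 2) powr a1)"
      unfolding lx_def
    proof (rule lux_lower[OF p1_meas Dm])
      show "AE x in ?L. a1 \<le> p1 x" using AEall by eventually_elim auto
      show "2 \<le> lux \<Omega> p1 (Du i0)" using lx2 by (simp add: lx_def)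
    qed
    moreover have "modular \<Omega> p1 (Du i0) = ennreal (LINT x|?L. \<bar>Du i0 x\<bar> powr p1 x)"
      unfolding modular_def by (rule nn_integral_eq_integral[OF iDp1]) simp
    ultimately have A1: "(lx i0 / 2) powr a1 \<le> (LINT x|?L. \<bar>Du i0 x\<bar> powr p1 x)"
      by (simp add: integral_nonneg_AE)
    have A2: "(LINT x|?L. \<bar>Du i0 x\<bar> powr p1 x) \<le> A" unfolding A_def
    proof (rule integral_mono_AE[OF iDp1 iA])
      show "AE x in ?L. \<bar>Du i0 x\<bar> powr p1 x \<le> norm (\<chi> i. Du i x) powr p1 x"
        using AEall
      proof eventually_elim
        case (elim x)
        have "\<bar>Du i0 x\<bar> \<le> norm (\<chi> i. Du i x)" using component_le_norm_cart[of "\<chi> i. Du i x" i0] by simp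
        then show ?case using elim by (intro powr_mono2) auto
      qed
    qed
    have t0: "t \<ge> 0" using t2N N1 by linarith
    have "lam0 t * t = (k0 * t) powr a1"
    proof -
      have "lam0 t * t = (k0 * t) powr (a1 - 1) * (k0 * t)" unfolding lam0_def e_def by simp
      also have "\<dots> = (k0 * t) powr a1" using k0 t0 by (intro powr_m1) simp
      finally show ?thesis .
    qed
    also have "(k0 * t) powr a1 \<le> (lx i0 / 2) powr a1"
    proof (rule powr_mono2)
      show "k0 * t \<le> lx i0 / 2" using tN N1 unfolding k0_def by (simp add: field_simps)
    qed (use a1 k0 t0 in auto)
    finally have partA: "lam0 t * t \<le> A" using A1 A2 by linarith
    define S where "S = Snorm \<Omega> p0 \<alpha> u Du"
    define Q where "Q s \<longleftrightarrow> modular \<Omega> \<alpha> (\<lambda>x. u x / s) +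
        (\<Sum>i\<in>UNIV. modular \<Omega> (\<lambda>x. p0 x / (p0 x - 1))
            (\<lambda>x. npow \<bar>u x\<bar> (p0 x / (p0 x - 1) * (p0 x - 2) / (p0 x / (p0 x - 1))) * Du i x /
                 s powr (p0 x / (p0 x - 1) * (p0 x - 2) / (p0 x / (p0 x - 1)) + 1))) \<le> 1" for s
    have Sdef: "S = Inf {s. s > 0 \<and> Q s}" unfolding S_def Snorm_def Let_def Q_def by (rule refl)
    define s where "s = S / 2"
    have S2: "S \<ge> 2" using sM M2 unfolding S_def by linarith
    have s1: "s \<ge> 1" using S2 unfolding s_def by simp
    have "\<not> Q s" unfolding s_def Sdef by (rule inf_half) (use S2 Sdef in simp)
    then have gt: "1 < modular \<Omega> \<alpha> (\<lambda>x. u x / s) +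
        (\<Sum>i\<in>UNIV. modular \<Omega> (\<lambda>x. p0 x / (p0 x - 1))
            (\<lambda>x. npow \<bar>u x\<bar> (p0 x / (p0 x - 1) * (p0 x - 2) / (p0 x / (p0 x - 1))) * Du i x /
                 s powr (p0 x / (p0 x - 1) * (p0 x - 2) / (p0 x / (p0 x - 1)) + 1)))"
      unfolding Q_def by simp
    have sp0: "s powr (-2) \<ge> 0" by simp
    have m1: "modular \<Omega> \<alpha> (\<lambda>x. u x / s) \<le> ennreal (LINT x|?L. s powr (-2) * \<bar>u x\<bar> powr \<alpha> x)"
    proof -
      have "modular \<Omega> \<alpha> (\<lambda>x. u x / s) \<le> (\<integral>\<^sup>+x. ennreal (s powr (-2) * \<bar>u x\<bar> powr \<alpha> x) \<partial>?L)"
        unfolding modular_def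
      proof (rule nn_integral_mono_AE)
        show "AE x in ?L. ennreal (\<bar>u x / s\<bar> powr \<alpha> x) \<le> ennreal (s powr (-2) * \<bar>u x\<bar> powr \<alpha> x)"
          using AEall
        proof eventually_elim
          case (elim x)
          show ?case by (rule ennreal_leI, rule pw_alpha[OF s1]) (use elim in linarith)
        qed
      qed
      also have "\<dots> = ennreal (LINT x|?L. s powr (-2) * \<bar>u x\<bar> powr \<alpha> x)"
        by (rule nn_integral_eq_integral) (use iUa in auto)
      finally show ?thesis .
    qed
    have m2: "modular \<Omega> (\<lambda>x. p0 x / (p0 x - 1))
            (\<lambda>x. npow \<bar>u x\<bar> (p0 x / (p0 x - 1) * (p0 x - 2) / (p0 x / (p0 x - 1))) * Du i x /
                 s powr (p0 x / (p0 x - 1) * (p0 x - 2) / (p0 x / (p0 x - 1)) + 1))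
        \<le> ennreal (LINT x|?L. s powr (-2) * (Bi i x + \<bar>u x\<bar> powr \<alpha> x + 1))" for i
    proof -
      have "modular \<Omega> (\<lambda>x. p0 x / (p0 x - 1))
            (\<lambda>x. npow \<bar>u x\<bar> (p0 x / (p0 x - 1) * (p0 x - 2) / (p0 x / (p0 x - 1))) * Du i x /
                 s powr (p0 x / (p0 x - 1) * (p0 x - 2) / (p0 x / (p0 x - 1)) + 1))
          \<le> (\<integral>\<^sup>+x. ennreal (s powr (-2) * (Bi i x + \<bar>u x\<bar> powr \<alpha> x + 1)) \<partial>?L)"
        unfolding modular_def
      proof (rule nn_integral_mono_AE)
        show "AE x in ?L. ennreal (\<bar>npow \<bar>u x\<bar> (p0 x / (p0 x - 1) * (p0 x - 2) / (p0 x / (p0 x - 1))) * Du i x /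
                 s powr (p0 x / (p0 x - 1) * (p0 x - 2) / (p0 x / (p0 x - 1)) + 1)\<bar> powr (p0 x / (p0 x - 1)))
             \<le> ennreal (s powr (-2) * (Bi i x + \<bar>u x\<bar> powr \<alpha> x + 1))"
          using AEall
        proof eventually_elim
          case (elim x)
          have "\<bar>u x\<bar> powr p0 x \<le> \<bar>u x\<bar> powr \<alpha> x + 1"
            by (rule pw_pow_le) (use elim \<epsilon>(1) in linarith)+
          then have h2: "s powr (-2) * (npow \<bar>u x\<bar> (p0 x - 2) * (Du i x)\<^sup>2 + \<bar>u x\<bar> powr p0 x)
              \<le> s powr (-2) * (npow \<bar>u x\<bar> (p0 x - 2) * (Du i x)\<^sup>2 + \<bar>u x\<bar> powr \<alpha> x + 1)"
            by (intro mult_left_mono) auto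
          have p0g: "2 \<le> p0 x" using elim by simp
          note h1 = pw_S[OF p0g s1, of "u x" "Du i x"]
          show ?case unfolding Bi_def by (rule ennreal_leI) (rule order_trans[OF h1 h2])
        qed
      qed
      also have "\<dots> = ennreal (LINT x|?L. s powr (-2) * (Bi i x + \<bar>u x\<bar> powr \<alpha> x + 1))"
        by (rule nn_integral_eq_integral) (use iUa iB Bi0 in auto)
      finally show ?thesis .
    qed
    have int1: "(LINT x|?L. s powr (-2) * \<bar>u x\<bar> powr \<alpha> x) = s powr (-2) * a"
      unfolding a_def by simp
    have int2: "(LINT x|?L. s powr (-2) * (Bi i x + \<bar>u x\<bar> powr \<alpha> x + 1)) = s powr (-2) * (b i + a + mu)" for i
      unfolding a_def b_def mu_def using iB iUa by simp
    have "1 < ennreal (s powr (-2) * a) + (\<Sum>i\<in>UNIV. ennreal (s powr (-2) * (b i + a + mu)))"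
    proof -
      have "modular \<Omega> \<alpha> (\<lambda>x. u x / s) +
        (\<Sum>i\<in>UNIV. modular \<Omega> (\<lambda>x. p0 x / (p0 x - 1))
            (\<lambda>x. npow \<bar>u x\<bar> (p0 x / (p0 x - 1) * (p0 x - 2) / (p0 x / (p0 x - 1))) * Du i x /
                 s powr (p0 x / (p0 x - 1) * (p0 x - 2) / (p0 x / (p0 x - 1)) + 1)))
          \<le> ennreal (s powr (-2) * a) + (\<Sum>i\<in>UNIV. ennreal (s powr (-2) * (b i + a + mu)))"
        by (intro add_mono sum_mono m1[unfolded int1] m2[unfolded int2])
      then show ?thesis using gt by (rule order.strict_trans2[rotated])
    qed
    also have "\<dots> = ennreal (s powr (-2) * a + (\<Sum>i\<in>UNIV. s powr (-2) * (b i + a + mu)))"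
      using a0 b0 mu0 by (simp add: sum_nonneg)
    finally have "1 < s powr (-2) * a + (\<Sum>i\<in>UNIV. s powr (-2) * (b i + a + mu))" by simp
    also have "\<dots> = s powr (-2) * (a + (\<Sum>i\<in>UNIV. b i) + N * (a + mu))"
      unfolding N_def by (simp add: sum_distrib_left sum_distrib_right sum.distrib algebra_simps)
    finally have "1 < s powr (-2) * (a + (\<Sum>i\<in>UNIV. b i) + N * (a + mu))" .
    then have ss: "s\<^sup>2 < a + (\<Sum>i\<in>UNIV. b i) + N * (a + mu)"
      using s1 by (simp add: powr_minus powr_numeral field_simps)
    have Cv1: "Ct * a \<le> Cv" unfolding a_def Cv_def
    proof -
      have "(LINT x|?L. Ct * \<bar>u x\<bar> powr \<alpha> x) \<le> (LINT x|?L. c x (u x) * u x)"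
      proof (rule integral_mono_AE)
        show "AE x in ?L. Ct * \<bar>u x\<bar> powr \<alpha> x \<le> c x (u x) * u x"
          using AEall
        proof eventually_elim
          case (elim x)
          have "Ct * \<bar>u x\<bar> powr \<alpha> x \<le> c2 x * \<bar>u x\<bar> powr \<alpha> x" using elim by (intro mult_right_mono) auto
          also have "\<dots> \<le> c x (u x) * u x" using elim by blast
          finally show ?case .
        qed
      qed (use iUa iCc in auto)
      then show "Ct * (LINT x|?L. \<bar>u x\<bar> powr \<alpha> x) \<le> (LINT x|?L. c x (u x) * u x)" by simp
    qed
    have Cv0: "Cv \<ge> 0" using Cv1 Ct(1) a0 by (smt (verit) mult_nonneg_nonneg)
    have sb0: "(\<Sum>i\<in>UNIV. b i) \<ge> 0" using b0 by (simp add: sum_nonneg)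
    have f1: "(N + 1) * a \<le> K * Cv"
    proof -
      have "a \<le> Cv / Ct" using Cv1 Ct(1) by (simp add: le_divide_eq mult.commute)
      then have "(N + 1) * a \<le> (N + 1) * (Cv / Ct)" using N1 by (intro mult_left_mono) auto
      also have "\<dots> = ((N + 1) / Ct) * Cv" by simp
      also have "\<dots> \<le> K * Cv" unfolding K_def using Cv0 by (intro mult_right_mono) auto
      finally show ?thesis .
    qed
    have f2: "(\<Sum>i\<in>UNIV. b i) \<le> K * (\<Sum>i\<in>UNIV. b i)"
      using mult_right_mono[OF K1 sb0] by simp
    have f3: "s\<^sup>2 < K * ((\<Sum>i\<in>UNIV. b i) + Cv) + N * mu"
      using ss f1 f2 by (simp add: algebra_simps)
    have "8 * N * mu \<le> S\<^sup>2" using M2(3) sM unfolding S_def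
      by (intro sqrt_le_D) linarith
    then have f4: "N * mu \<le> s\<^sup>2 / 2" unfolding s_def by (simp add: power2_eq_square field_simps)
    have f5: "s\<^sup>2 / 2 < K * ((\<Sum>i\<in>UNIV. b i) + Cv)" using f3 f4 by linarith
    have "lam1 S * S = s\<^sup>2 / (2 * K)" unfolding lam1_def s_def by (simp add: power2_eq_square field_simps)
    also have "\<dots> \<le> (\<Sum>i\<in>UNIV. b i) + Cv" using f5 K1 by (simp add: field_simps)
    finally have partS: "lam1 S * S \<le> (\<Sum>i\<in>UNIV. b i) + Cv" .
    show ?thesis using partA partS Tp unfolding t_def S_def by linarith
  qed
  show ?thesis
  proof (intro exI conjI allI impI)
    show "M > 0" using M2 by simp
    show "continuous_on {0..} lam0" unfolding lam0_def
      by (intro continuous_intros continuous_on_powr') (use k0 e0 in auto)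
    show "mono_on {0..} lam0"
    proof (rule mono_onI)
      fix r t :: real assume "r \<in> {0..}" "t \<in> {0..}" "r \<le> t"
      then have "(k0 * r) powr e \<le> (k0 * t) powr e" using k0 e0 by (intro powr_mono2) auto
      then show "lam0 r \<le> lam0 t" unfolding lam0_def using k0 by (intro mult_right_mono) auto
    qed
    show "filterlim lam0 at_top at_top" unfolding lam0_def using powr_at_top[OF e0 k0] .
    show "continuous_on {0..} lam1" unfolding lam1_def by (intro continuous_intros)
    show "mono_on {0..} lam1" unfolding lam1_def using K1 by (intro mono_onI mult_left_mono) auto
    show "filterlim lam1 at_top at_top" unfolding lam1_def
      using filterlim_tendsto_pos_mult_at_top[OF tendsto_const _ filterlim_ident, of "1 / (8 * K)"] K1 by simp
  qed (rule key, assumption)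
qed


end
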